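(* Let $n\in\mathbb{N}$, $K>0$, $\Gamma\ge0$, and let $f:[-K,K]^n\to\mathbb{R}$ be $\Gamma$-Lipschitz with respect to $\|\cdot\|_\infty$. Then for every $\epsilon>0$ there exists a discrete-time LIF-SNN $\Phi$ with direct encoding, membrane potential output, $T=1$, $L=2$ and hidden-layer widths $n_1=\big(\max\{\lceil\frac{2K}{\epsilon}\Gamma\rceil,1\}+1\big)n$, $n_2=\max\{\lceil\frac{2K\Gamma}{\epsilon}\rceil^n,1\}$, such that $\sup_{x\in[-K,K]^n}|R(\Phi)(x)-f(x)|\le\epsilon$.
   Context: A function $f$ is $\Gamma$-Lipschitz w.r.t. $\|\cdot\|_\infty$ if $|f(x)-f(y)|\le\Gamma\max_i|x_i-y_i|$ for all $x,y$. A discrete-time LIF-SNN with parameters $W^\ell\in\mathbb{R}^{n_\ell\times n_{\ell-1}}$, $b^\ell\in\mathbb{R}^{n_\ell}$, $u^\ell(0)\in\mathbb{R}^{n_\ell}$, $\beta^\ell\in[0,1]$, $\vartheta^\ell>0$ ($n_0=n$) and direct encoding ($s^0(t)=x$ for all $t\in[T]$) computes $s^\ell(t)=H(\beta^\ell u^\ell(t-1)+W^\ell s^{\ell-1}(t)+b^\ell-\vartheta^\ell\mathbf{1})$, $u^\ell(t)=\beta^\ell u^\ell(t-1)+W^\ell s^{\ell-1}(t)+b^\ell-\vartheta^\ell s^\ell(t)$, $\ell\in[L]$, $t\in[T]$, with $H$ the entrywise Heaviside function ($H(z)=1$ iff $z\ge0$); with membrane potential output its realization is $R(\Phi)(x)=\sum_{t=1}^Ta_t(Vs^L(t)+c)$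 for $a\in\mathbb{R}^T$, $V\in\mathbb{R}^{1\times n_L}$, $c\in\mathbb{R}$. *)

theory Defs
  imports Complex_Main
begin

text \<open>Vectors in R^m are represented as functions nat => real, only the
  components 0..m-1 being relevant.\<close>

definition heav :: "real \<Rightarrow> real" where
  "heav z = (if z \<ge> 0 then 1 else 0)"

definition dist_inf :: "nat \<Rightarrow> (nat \<Rightarrow> real) \<Rightarrow> (nat \<Rightarrow> real) \<Rightarrow> real" where
  "dist_inf n x y = Max (insert 0 {\<bar>x i - y i\<bar> | i. i < n})"

definition lipschitz_inf_on :: "nat \<Rightarrow> (nat \<Rightarrow> real) set \<Rightarrow> real \<Rightarrow> ((nat \<Rightarrow> real) \<Rightarrow> real) \<Rightarrow> bool" where
  "lipschitz_inf_on n S \<Gamma> f \<longleftrightarrow> (\<forall>x\<in>S. \<forall>y\<in>S. \<bar>f x - f y\<bar> \<le> \<Gamma> * dist_inf n x y)"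

definition cube :: "nat \<Rightarrow> real \<Rightarrow> (nat \<Rightarrow> real) set" where
  "cube n K = {x. \<forall>i<n. -K \<le> x i \<and> x i \<le> K}"

text \<open>A discrete-time LIF-SNN with direct encoding and membrane potential output.
  Layer l ranges over 1..depth; width 0 is the input dimension n;
  time t ranges over 1..steps.\<close>
record lif_snn =
  depth :: nat
  width :: "nat \<Rightarrow> nat"
  weight :: "nat \<Rightarrow> nat \<Rightarrow> nat \<Rightarrow> real"
  bias :: "nat \<Rightarrow> nat \<Rightarrow> real"
  u0 :: "nat \<Rightarrow> nat \<Rightarrow> real"
  leak :: "nat \<Rightarrow> real"
  thr :: "nat \<Rightarrow> real"
  steps :: nat
  out_a :: "nat \<Rightarrow> real"
  out_V :: "nat \<Rightarrow> real"
  out_c :: real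

definition snn_wf :: "lif_snn \<Rightarrow> bool" where
  "snn_wf N \<longleftrightarrow> (\<forall>l\<in>{1..depth N}. 0 \<le> leak N l \<and> leak N l \<le> 1 \<and> thr N l > 0)"

text \<open>State (spike vector s^l(t), membrane potential u^l(t)) of layer l at time t;
  layer 0 is the direct encoding s^0(t) = x.\<close>
fun snn_state :: "lif_snn \<Rightarrow> (nat \<Rightarrow> real) \<Rightarrow> nat \<Rightarrow> nat \<Rightarrow> (nat \<Rightarrow> real) \<times> (nat \<Rightarrow> real)" where
  "snn_state N x 0 t = (x, (\<lambda>i. 0))"
| "snn_state N x (Suc l) 0 = ((\<lambda>i. 0), u0 N (Suc l))"
| "snn_state N x (Suc l) (Suc t) =
     (let pre = (\<lambda>i. leak N (Suc l) * snd (snn_state N x (Suc l) t) i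
                    + (\<Sum>j<width N l. weight N (Suc l) i j * fst (snn_state N x l (Suc t)) j)
                    + bias N (Suc l) i);
          s = (\<lambda>i. heav (pre i - thr N (Suc l)))
      in (s, (\<lambda>i. pre i - thr N (Suc l) * s i)))"

definition spikes :: "lif_snn \<Rightarrow> (nat \<Rightarrow> real) \<Rightarrow> nat \<Rightarrow> nat \<Rightarrow> nat \<Rightarrow> real" where
  "spikes N x l t = fst (snn_state N x l t)"

definition realization :: "lif_snn \<Rightarrow> (nat \<Rightarrow> real) \<Rightarrow> real" where
  "realization N x = (\<Sum>t=1..steps N. out_a N t *
      ((\<Sum>i<width N (depth N). out_V N i * spikes N x (depth N) t i) + out_c N))"

end

theory Submission
  imports Defs
begin

lemma regroup:
  fixes g :: "nat \<Rightarrow> real"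
  shows "(\<Sum>q<a*n. g q) = (\<Sum>i<n. \<Sum>k<a. g (i*a+k))"
proof -
  have "(\<Sum>q<a*n. g q) = (\<Sum>i<n. \<Sum>q\<in>{i*a..<i*a+a}. g q)"
    using sum.nat_group[of g a n] by (simp add: mult.commute)
  also have "\<dots> = (\<Sum>i<n. \<Sum>k<a. g (i*a+k))"
  proof (rule sum.cong[OF refl])
    fix i
    have e: "sum g {0 + i*a..<a + i*a} = (\<Sum>k=0..<a. g (k+i*a))"
      by (rule sum.shift_bounds_nat_ivl)
    have "(\<Sum>q\<in>{i*a..<i*a+a}. g q) = (\<Sum>k\<in>{0..<a}. g (i*a+k))"
      using e by (simp add: add.commute)
    then show "(\<Sum>q\<in>{i*a..<i*a+a}. g q) = (\<Sum>k<a. g (i*a+k))"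
      by (simp add: atLeast0LessThan)
  qed
  finally show ?thesis .
qed

definition dig :: "nat \<Rightarrow> nat \<Rightarrow> nat \<Rightarrow> nat" where
  "dig m j i = (j div m ^ i) mod m"

lemma digits_unique:
  assumes "m > 0"
  shows "(\<forall>i<n. c i < m) \<Longrightarrow> \<exists>!j. j < m ^ n \<and> (\<forall>i<n. dig m j i = c i)"
proof (induction n arbitrary: c)
  case 0
  then show ?case by auto
next
  case (Suc n)
  define c' where "c' = (\<lambda>i. c (Suc i))"
  have "\<forall>i<n. c' i < m" using Suc.prems by (simp add: c'_def)
  then obtain j' where j': "j' < m ^ n" "\<forall>i<n. dig m j' i = c' i"
    and uq: "\<And>j2. j2 < m ^ n \<Longrightarrow> (\<forall>i<n. dig m j2 i = c' i) \<Longrightarrow> j2 = j'"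
    using Suc.IH by metis
  have c0: "c 0 < m" using Suc.prems by auto
  define j where "j = c 0 + m * j'"
  have jdm: "j div m = j'" "j mod m = c 0" using c0 assms by (auto simp: j_def)
  have digS: "dig m k (Suc i) = dig m (k div m) i" for k i
    by (simp add: dig_def div_mult2_eq mult.commute)
  show ?case
  proof (rule ex1I[of _ j])
    have "j' + 1 \<le> m ^ n" using j' by simp
    then have "m * (j' + 1) \<le> m * m ^ n" by (rule mult_le_mono2)
    then show "j < m ^ Suc n \<and> (\<forall>i<Suc n. dig m j i = c i)"
      using c0 j' jdm
      apply (auto simp: j_def)
      apply (simp add: algebra_simps)
      subgoal for i
        apply (cases i)
         apply (simp add: dig_def)
        by (simp add: digS c'_def)
      done
  next
    fix j2 assume h: "j2 < m ^ Suc n \<and> (\<forall>i<Suc n. dig m j2 i = c i)"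
    have "j2 div m < m ^ n" using h assms
      by (simp add: div_less_iff_less_mult mult.commute)
    moreover have "\<forall>i<n. dig m (j2 div m) i = c' i"
      using h by (simp add: c'_def flip: digS)
    ultimately have "j2 div m = j'" using uq by blast
    moreover have "j2 mod m = c 0" using h by (auto simp: dig_def)
    ultimately show "j2 = j"
      by (metis j_def mod_mult_div_eq add.commute)
  qed
qed

lemma dm1: "k < a \<Longrightarrow> (i*a+k) div a = (i::nat)"
  by (simp add: add.commute[of "i*a"])
lemma dm2: "k < a \<Longrightarrow> (i*a+k) mod a = (k::nat)"
  by (simp add: add.commute[of "i*a"])

definition thrv :: "real \<Rightarrow> nat \<Rightarrow> nat \<Rightarrow> real" where
  "thrv K m k = (if k = 0 then -2*K else if k = m then 2*K else -K + 2*K*real k/real m)"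

definition center :: "real \<Rightarrow> nat \<Rightarrow> nat \<Rightarrow> nat \<Rightarrow> real" where
  "center K m j = (\<lambda>i. -K + 2*K*real (dig m j i)/real m)"

definition net :: "nat \<Rightarrow> real \<Rightarrow> nat \<Rightarrow> ((nat \<Rightarrow> real) \<Rightarrow> real) \<Rightarrow> lif_snn" where
  "net n K m f = \<lparr> depth = 2,
     width = (\<lambda>l. if l = 0 then n else if l = 1 then (m+1)*n else m^n),
     weight = (\<lambda>l p q. if l = 1 then (if q = p div (m+1) then 1 else 0)
        else (if q mod (m+1) = dig m p (q div (m+1)) then 1 else 0)
           - (if q mod (m+1) = Suc (dig m p (q div (m+1))) then 1 else 0)),
     bias = (\<lambda>l p. if l = 1 then 1 - thrv K m (p mod (m+1)) else 1 - real n),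
     u0 = (\<lambda>l i. 0), leak = (\<lambda>l. 0), thr = (\<lambda>l. 1), steps = 1, out_a = (\<lambda>t. 1),
     out_V = (\<lambda>j. f (center K m j)), out_c = 0 \<rparr>"

lemma layer1:
  assumes "q div (m+1) < n"
  shows "fst (snn_state (net n K m f) x (Suc 0) (Suc 0)) q
     = heav (x (q div (m+1)) - thrv K m (q mod (m+1)))"
  using assms by (simp add: net_def Let_def if_distrib[of "\<lambda>z. z * _"] cong: if_cong)

lemma layer2:
  assumes "m > 0"
  shows "fst (snn_state (net n K m f) x (Suc (Suc 0)) (Suc 0)) j
     = heav ((\<Sum>i<n. heav (x i - thrv K m (dig m j i)) - heav (x i - thrv K m (Suc (dig m j i)))) - real n)"
proof -
  let ?N = "net n K m f"
  let ?s1 = "fst (snn_state ?N x (Suc 0) (Suc 0))"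
  let ?W = "\<lambda>q. ((if q mod (m+1) = dig m j (q div (m+1)) then 1 else 0)
           - (if q mod (m+1) = Suc (dig m j (q div (m+1))) then 1 else 0)) :: real"
  have "(\<Sum>q<(m+1)*n. ?W q * ?s1 q) = (\<Sum>i<n. \<Sum>k<m+1. ?W (i*(m+1)+k) * ?s1 (i*(m+1)+k))"
    by (rule regroup)
  also have "\<dots> = (\<Sum>i<n. heav (x i - thrv K m (dig m j i)) - heav (x i - thrv K m (Suc (dig m j i))))"
  proof (rule sum.cong[OF refl])
    fix i assume i: "i \<in> {..<n}"
    have dv: "(i*(m+1)+k) div (m+1) = i" "(i*(m+1)+k) mod (m+1) = k" if "k < m+1" for k
      using that by (rule dm1, rule dm2)
    have "(\<Sum>k<m+1. ?W (i*(m+1)+k) * ?s1 (i*(m+1)+k))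
       = (\<Sum>k<m+1. ((if k = dig m j i then 1 else 0) - (if k = Suc (dig m j i) then 1 else 0))
            * heav (x i - thrv K m k))"
    proof (rule sum.cong[OF refl])
      fix k assume "k \<in> {..<m+1}"
      then have kk: "k < m+1" by simp
      have "?s1 (i*(m+1)+k) = heav (x i - thrv K m k)"
        using layer1[of "i*(m+1)+k" m n K f x] i unfolding dv[OF kk] by simp
      then show "?W (i*(m+1)+k) * ?s1 (i*(m+1)+k) = ((if k = dig m j i then 1 else 0) - (if k = Suc (dig m j i) then 1 else 0))
            * heav (x i - thrv K m k)"
        unfolding dv[OF kk] by simp
    qed
    also have "\<dots> = (\<Sum>k<m+1. (if k = dig m j i then heav (x i - thrv K m k) else 0))
         - (\<Sum>k<m+1. (if k = Suc (dig m j i) then heav (x i - thrv K m k) else 0))"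
      by (simp add: left_diff_distrib sum_subtractf if_distrib[of "\<lambda>z. z * _"] cong: if_cong)
    also have "\<dots> = heav (x i - thrv K m (dig m j i)) - heav (x i - thrv K m (Suc (dig m j i)))"
    proof -
      have "dig m j i < m" using assms by (simp add: dig_def)
      then show ?thesis by simp
    qed
    finally show "(\<Sum>k<m+1. ?W (i*(m+1)+k) * ?s1 (i*(m+1)+k)) = \<dots>" .
  qed
  finally have S: "(\<Sum>q<(m+1)*n. ?W q * ?s1 q) = (\<Sum>i<n. heav (x i - thrv K m (dig m j i)) - heav (x i - thrv K m (Suc (dig m j i))))" .
  show ?thesis
    apply (subst snn_state.simps)
    apply (simp only: Let_def fst_conv)
    apply (simp add: net_def)
    using S by (simp add: net_def algebra_simps)
qed

lemma thrv_mono: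
  assumes "m > 0" "K > 0" "a \<le> b" "b \<le> m"
  shows "thrv K m a \<le> thrv K m b"
proof -
  have up: "-K + 2*K*real k/real m \<le> K" if "k \<le> m" for k
  proof -
    have "2*K*real k/real m \<le> 2*K*real m/real m"
      using that assms by (intro divide_right_mono mult_left_mono) auto
    then show ?thesis using assms by simp
  qed
  have lo: "-K \<le> -K + 2*K*real k/real m" for k
    using assms by simp
  have mid: "2*K*real a/real m \<le> 2*K*real b/real m"
    using assms by (intro divide_right_mono mult_left_mono) auto
  show ?thesis
    unfolding thrv_def using up[of a] up[of b] lo[of a] lo[of b] mid assms by auto
qed

lemma cell_ex1:
  assumes "m > 0" "K > 0" "-K \<le> y" "y \<le> K"
  shows "\<exists>!d. d < m \<and> thrv K m d \<le> y \<and> y < thrv K m (Suc d)"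
proof -
  define D where "D = {k. k < m \<and> thrv K m k \<le> y}"
  have "0 \<in> D" using assms by (simp add: D_def thrv_def)
  have fD: "finite D" by (simp add: D_def)
  define d where "d = Max D"
  have dD: "d \<in> D" using fD \<open>0 \<in> D\<close> unfolding d_def by (intro Max_in) auto
  have dmax: "k \<in> D \<Longrightarrow> k \<le> d" for k using fD by (simp add: d_def)
  have "y < thrv K m (Suc d)"
  proof (cases "Suc d = m")
    case True then show ?thesis using assms by (simp add: thrv_def)
  next
    case False
    then have "Suc d < m" using dD by (simp add: D_def)
    then have "Suc d \<notin> D" using dmax by fastforce
    then show ?thesis using \<open>Suc d < m\<close> by (auto simp: D_def)
  qed
  then have ex: "d < m \<and> thrv K m d \<le> y \<and> y < thrv K m (Suc d)" using dD by (simp add: D_def)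
  show ?thesis
  proof (rule ex1I[of _ d])
    show "d < m \<and> thrv K m d \<le> y \<and> y < thrv K m (Suc d)" by (rule ex)
  next
    fix d2 assume h: "d2 < m \<and> thrv K m d2 \<le> y \<and> y < thrv K m (Suc d2)"
    have "\<not> d2 < d"
    proof
      assume "d2 < d"
      then have "thrv K m (Suc d2) \<le> thrv K m d" using thrv_mono[of m K "Suc d2" d] assms ex by auto
      then show False using h ex by linarith
    qed
    moreover have "\<not> d < d2"
    proof
      assume "d < d2"
      then have "thrv K m (Suc d) \<le> thrv K m d2" using thrv_mono[of m K "Suc d" d2] assms h by auto
      then show False using h ex by linarith
    qed
    ultimately show "d2 = d" by simp
  qed
qed

lemma cell_bounds:
  assumes "m > 0" "K > 0" "-K \<le> y" "y \<le> K" "d < m" "thrv K m d \<le> y" "y < thrv K m (Suc d)"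
  shows "-K + 2*K*real d/real m \<le> y \<and> y \<le> -K + 2*K*real d/real m + 2*K/real m"
proof
  show "-K + 2*K*real d/real m \<le> y"
    using assms by (cases "d = 0") (auto simp: thrv_def)
  have e: "-K + 2*K*real d/real m + 2*K/real m = -K + 2*K*real (Suc d)/real m"
    using assms by (simp add: field_simps)
  show "y \<le> -K + 2*K*real d/real m + 2*K/real m"
    unfolding e using assms by (cases "Suc d = m") (auto simp: thrv_def)
qed

lemma heav_diff: "heav a - heav b \<le> 1" "heav a - heav b = 1 \<longleftrightarrow> a \<ge> 0 \<and> b < 0"
  by (auto simp: heav_def)

lemma sum_all:
  fixes e :: "nat \<Rightarrow> real"
  assumes "\<forall>i<n. e i \<le> 1"
  shows "(\<Sum>i<n. e i) - real n \<ge> 0 \<longleftrightarrow> (\<forall>i<n. e i = 1)"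
proof
  assume h: "(\<Sum>i<n. e i) - real n \<ge> 0"
  show "\<forall>i<n. e i = 1"
  proof (rule ccontr)
    assume "\<not> (\<forall>i<n. e i = 1)"
    then obtain i where "i < n" "e i < 1" using assms by force
    then have "(\<Sum>i<n. e i) < (\<Sum>i<n. (1::real))"
      using assms by (intro sum_strict_mono_ex1) auto
    then show False using h by simp
  qed
next
  assume "\<forall>i<n. e i = 1"
  then have "(\<Sum>i<n. e i) = (\<Sum>i<n. (1::real))" by simp
  then show "(\<Sum>i<n. e i) - real n \<ge> 0" by simp
qed

lemma dist_inf_le:
  assumes "\<forall>i<n. \<bar>x i - y i\<bar> \<le> B" "B \<ge> 0"
  shows "dist_inf n x y \<le> B"
  unfolding dist_inf_def using assms
  by (intro Max.boundedI) auto

lemma net_main: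
  assumes m: "m > 0" and K: "K > 0" and G: "\<Gamma> \<ge> 0"
    and lip: "lipschitz_inf_on n (cube n K) \<Gamma> f" and x: "x \<in> cube n K"
  shows "\<bar>realization (net n K m f) x - f x\<bar> \<le> \<Gamma> * (2*K/real m)"
proof -
  let ?N = "net n K m f"
  define P where "P i d \<longleftrightarrow> d < m \<and> thrv K m d \<le> x i \<and> x i < thrv K m (Suc d)" for i d
  have xb: "i < n \<Longrightarrow> -K \<le> x i \<and> x i \<le> K" for i using x by (simp add: cube_def)
  have ex1: "i < n \<Longrightarrow> \<exists>!d. P i d" for i
    unfolding P_def using cell_ex1[OF m K] xb by blast
  define c where "c i = (THE d. P i d)" for i
  have cP: "i < n \<Longrightarrow> P i (c i)" for i unfolding c_def using ex1 by (rule theI')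
  have cu: "i < n \<Longrightarrow> P i d \<Longrightarrow> d = c i" for i d
    unfolding c_def using ex1 by (metis the1_equality)
  have "\<forall>i<n. c i < m" using cP by (simp add: P_def)
  then obtain j0 where j0: "j0 < m ^ n" "\<forall>i<n. dig m j0 i = c i"
    and uq: "\<And>j. j < m ^ n \<Longrightarrow> \<forall>i<n. dig m j i = c i \<Longrightarrow> j = j0"
    using digits_unique[OF m] by metis
  have dl: "dig m j i < m" for j i using m by (simp add: dig_def)
  have s2: "fst (snn_state ?N x (Suc (Suc 0)) (Suc 0)) j = (if j = j0 then 1 else 0)"
    if j: "j < m ^ n" for j
  proof -
    define e where "e i = heav (x i - thrv K m (dig m j i)) - heav (x i - thrv K m (Suc (dig m j i)))" for i
    have e1: "\<forall>i<n. e i \<le> 1" unfolding e_def using heav_diff(1) by blast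
    have eP: "e i = 1 \<longleftrightarrow> P i (dig m j i)" for i
      unfolding e_def heav_diff(2) P_def using dl[of j i] by auto
    have "fst (snn_state ?N x (Suc (Suc 0)) (Suc 0)) j = heav ((\<Sum>i<n. e i) - real n)"
      unfolding e_def by (rule layer2[OF m])
    also have "\<dots> = (if (\<forall>i<n. e i = 1) then 1 else 0)"
      using sum_all[OF e1] by (simp add: heav_def)
    also have "(\<forall>i<n. e i = 1) \<longleftrightarrow> j = j0"
    proof
      assume "\<forall>i<n. e i = 1"
      then have "\<forall>i<n. dig m j i = c i" using eP cu by blast
      then show "j = j0" using uq j by blast
    next
      assume "j = j0"
      then show "\<forall>i<n. e i = 1" using eP cP j0(2) by simp
    qed
    finally show ?thesis .
  qed
  have R: "realization ?N x = f (center K m j0)"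
  proof -
    have "realization ?N x = (\<Sum>j<m^n. f (center K m j) * fst (snn_state ?N x (Suc (Suc 0)) (Suc 0)) j)"
      unfolding realization_def spikes_def by (simp add: net_def numeral_2_eq_2 del: snn_state.simps)
    also have "\<dots> = (\<Sum>j<m^n. if j = j0 then f (center K m j) else 0)"
      by (rule sum.cong) (auto simp: s2 simp del: snn_state.simps)
    also have "\<dots> = f (center K m j0)" using j0 by simp
    finally show ?thesis .
  qed
  have cb: "\<forall>i<n. -K + 2*K*real (c i)/real m \<le> x i \<and> x i \<le> -K + 2*K*real (c i)/real m + 2*K/real m"
    using cP xb cell_bounds[OF m K] unfolding P_def by blast
  have cin: "center K m j0 \<in> cube n K"
    unfolding cube_def center_def
  proof (intro CollectI allI impI conjI)
    fix i assume i: "i < n"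
    have "real (c i) \<le> real m" using cP[OF i] by (simp add: P_def)
    then have "2*K*real (c i)/real m \<le> 2*K*real m/real m"
      using m K by (intro divide_right_mono mult_left_mono) auto
    then show "-K + 2*K*real (dig m j0 i)/real m \<le> K" using j0 i m by simp
    show "-K \<le> -K + 2*K*real (dig m j0 i)/real m" using K by simp
  qed
  have "dist_inf n (center K m j0) x \<le> 2*K/real m"
    using cb j0(2) K m by (intro dist_inf_le) (auto simp: center_def abs_le_iff)
  moreover have "\<bar>f (center K m j0) - f x\<bar> \<le> \<Gamma> * dist_inf n (center K m j0) x"
    using lip cin x by (simp add: lipschitz_inf_on_def)
  ultimately have "\<bar>f (center K m j0) - f x\<bar> \<le> \<Gamma> * (2*K/real m)"
    using G by (meson mult_left_mono order_trans)
  then show ?thesis using R by simp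
qed

theorem corollaryB9:
  fixes n :: nat and K \<Gamma> :: real and f :: "(nat \<Rightarrow> real) \<Rightarrow> real"
  assumes "K > 0" and "\<Gamma> \<ge> 0"
    and "lipschitz_inf_on n (cube n K) \<Gamma> f"
  shows "\<forall>\<epsilon>>0. \<exists>N. snn_wf N \<and> steps N = 1 \<and> depth N = 2 \<and> width N 0 = n
      \<and> width N 1 = (max (nat \<lceil>2 * K / \<epsilon> * \<Gamma>\<rceil>) 1 + 1) * n
      \<and> width N 2 = max ((nat \<lceil>2 * K * \<Gamma> / \<epsilon>\<rceil>) ^ n) 1
      \<and> (\<forall>x\<in>cube n K. \<bar>realization N x - f x\<bar> \<le> \<epsilon>)"
proof (intro allI impI)
  fix \<epsilon> :: real assume ep: "\<epsilon> > 0"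
  define M where "M = nat \<lceil>2 * K * \<Gamma> / \<epsilon>\<rceil>"
  define m where "m = max M 1"
  have M': "nat \<lceil>2 * K / \<epsilon> * \<Gamma>\<rceil> = M" unfolding M_def by simp
  have m0: "m > 0" by (simp add: m_def)
  have w2: "max (M ^ n) 1 = m ^ n"
  proof (cases "M = 0")
    case True then show ?thesis by (cases n) (auto simp: m_def)
  next
    case False
    then have "M ^ n \<ge> 1" by simp
    have "m = M" using False by (simp add: m_def)
    moreover have "max (M ^ n) 1 = M ^ n" using \<open>M ^ n \<ge> 1\<close> by (rule max_absorb1)
    ultimately show ?thesis by simp
  qed
  have bnd: "\<Gamma> * (2*K/real m) \<le> \<epsilon>"
  proof (cases "\<Gamma> = 0")
    case True then show ?thesis using ep by simp
  next
    case False
    have "2 * K * \<Gamma> / \<epsilon> \<le> real M" unfolding M_def by linarith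
    also have "\<dots> \<le> real m" by (simp add: m_def)
    finally have "2 * K * \<Gamma> \<le> \<epsilon> * real m" using ep by (simp add: field_simps)
    then show ?thesis using m0 by (simp add: field_simps)
  qed
  let ?N = "net n K m f"
  show "\<exists>N. snn_wf N \<and> steps N = 1 \<and> depth N = 2 \<and> width N 0 = n
      \<and> width N 1 = (max (nat \<lceil>2 * K / \<epsilon> * \<Gamma>\<rceil>) 1 + 1) * n
      \<and> width N 2 = max ((nat \<lceil>2 * K * \<Gamma> / \<epsilon>\<rceil>) ^ n) 1
      \<and> (\<forall>x\<in>cube n K. \<bar>realization N x - f x\<bar> \<le> \<epsilon>)"
  proof (intro exI[of _ ?N] conjI ballI)
    show "snn_wf ?N" by (simp add: snn_wf_def net_def)
    show "steps ?N = 1" "depth ?N = 2" "width ?N 0 = n" by (simp_all add: net_def)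
    show "width ?N 1 = (max (nat \<lceil>2 * K / \<epsilon> * \<Gamma>\<rceil>) 1 + 1) * n"
      unfolding M' by (simp add: net_def m_def)
    show "width ?N 2 = max ((nat \<lceil>2 * K * \<Gamma> / \<epsilon>\<rceil>) ^ n) 1"
      using w2 by (simp add: net_def M_def)
    fix x assume "x \<in> cube n K"
    then show "\<bar>realization ?N x - f x\<bar> \<le> \<epsilon>"
      using net_main[OF m0 assms \<open>x \<in> cube n K\<close>] bnd by linarith
  qed
qed

end
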